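(* Let $p$ be a real number, let $F\subset\mathrm{Sym}^2(\mathbb{R}^n)$ be a cone subequation, and let $g\in C^2(S^{n-1})$ and $u(x)=\frac{1}{|x|^{p-2}}g\big(\frac{x}{|x|}\big)$ on $\mathbb{R}^n\setminus\{0\}$. Then $u$ is $F$-subharmonic on $\mathbb{R}^n\setminus\{0\}$ (i.e. $D^2_xu\in F$ for all $x\neq0$) if and only if $\Phi(J^2_\sigma g)\in F$ for all $\sigma\in S^{n-1}$; and $u$ is $F$-harmonic on $\mathbb{R}^n\setminus\{0\}$ (i.e. $D^2_xu\in\partial F$ for all $x\ne0$) if and only if $\Phi(J^2_\sigma g)\in\partial F$ for all $\sigma\in S^{n-1}$.
   Context: A cone subequation is a closed subset $F\subset\mathrm{Sym}^2(\mathbb{R}^n)$, $\emptyset\ne F\ne\mathrm{Sym}^2(\mathbb{R}^n)$, with $F+\mathcal{P}\subset F$ where $\mathcal{P}=\{A\ge0\}$, and $tF\subset F$ for all $t\ge0$. For $\sigma\in S^{n-1}$, $J^2_\sigma g=(g(\sigma),D_\sigma g,\mathrm{Hess}_\sigma g)$ is the Riemannian $2$-jet of $g$; using $\mathbb{R}^n=T_\sigma S^{n-1}\oplus\mathbb{R}\sigma$, the tangent vector $D_\sigma g$ is regarded as a vector in $\mathbb{R}^n$ and the quadratic form $\mathrm{Hess}_\sigma g$ is extended by zero on $\mathbb{R}\sigma$. Define $$\Phi(J^2_\sigma g)=\mathrm{Hess}_\sigma g-(p-2)g(\sigma)P_{\sigma^\perp}-(p-1)\big(\sigma\circ D_\sigma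 g\big)+(p-2)(p-1)g(\sigma)P_\sigma\in\mathrm{Sym}^2(\mathbb{R}^n),$$ where $P_\sigma,P_{\sigma^\perp}$ are orthogonal projections onto $\mathbb{R}\sigma$ and $\sigma^\perp$, and $\sigma\circ w=\sigma w^t+w\sigma^t$. Equivalently, in block form for $T_\sigma S^{n-1}\oplus\mathbb{R}\sigma$, $\Phi=\begin{pmatrix}\mathrm{Hess}\,g-(p-2)gI & -(p-1)Dg\\ -(p-1)Dg^t & (p-2)(p-1)g\end{pmatrix}$. *)

theory Defs
  imports "HOL-Analysis.Analysis"
begin

text \<open>Symmetric n x n real matrices, Sym^2(R^n), and the positive semidefinite cone P.\<close>
definition Sym :: "(real^'n^'n) set" where
  "Sym = {A. transpose A = A}"

definition PSD :: "(real^'n^'n) set" where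
  "PSD = {A \<in> Sym. \<forall>v. 0 \<le> v \<bullet> (A *v v)}"

definition cone_subequation :: "(real^'n^'n) set \<Rightarrow> bool" where
  "cone_subequation F \<longleftrightarrow> F \<subseteq> Sym \<and> closed F \<and> F \<noteq> {} \<and> F \<noteq> Sym \<and>
     (\<forall>A\<in>F. \<forall>P\<in>PSD. A + P \<in> F) \<and> (\<forall>A\<in>F. \<forall>t::real. t \<ge> 0 \<longrightarrow> t *\<^sub>R A \<in> F)"

text \<open>Boundary of F inside Sym^2(R^n).\<close>
definition bdry :: "(real^'n^'n) set \<Rightarrow> (real^'n^'n) set" where
  "bdry F = (top_of_set Sym) frontier_of F"

text \<open>Euclidean gradient and Hessian (via Frechet derivatives).\<close>
definition pd :: "(real^'n \<Rightarrow> real) \<Rightarrow> 'n \<Rightarrow> real^'n \<Rightarrow> real" where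
  "pd f j x = frechet_derivative f (at x) (axis j 1)"

definition grad :: "(real^'n \<Rightarrow> real) \<Rightarrow> real^'n \<Rightarrow> real^'n" where
  "grad f x = (\<chi> i. pd f i x)"

definition hess :: "(real^'n \<Rightarrow> real) \<Rightarrow> real^'n \<Rightarrow> real^'n^'n" where
  "hess f x = (\<chi> i j. pd (pd f j) i x)"

definition C1_on :: "(real^'n) set \<Rightarrow> (real^'n \<Rightarrow> real) \<Rightarrow> bool" where
  "C1_on U f \<longleftrightarrow> (\<forall>x\<in>U. f differentiable (at x)) \<and> (\<forall>j. continuous_on U (pd f j))"

definition C2_on :: "(real^'n) set \<Rightarrow> (real^'n \<Rightarrow> real) \<Rightarrow> bool" where
  "C2_on U f \<longleftrightarrow> C1_on U f \<and> (\<forall>j. C1_on U (pd f j))"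

text \<open>Functions on the unit sphere S^{n-1} are represented by functions on R^n, only their
 values on the sphere matter.  The 0-homogeneous extension:\<close>
definition sph_ext :: "(real^'n \<Rightarrow> real) \<Rightarrow> real^'n \<Rightarrow> real" where
  "sph_ext g x = g (x /\<^sub>R norm x)"

text \<open>g is in C^2(S^{n-1}) iff its 0-homogeneous extension is C^2 on R^n minus 0.\<close>
definition C2_sphere :: "(real^'n \<Rightarrow> real) \<Rightarrow> bool" where
  "C2_sphere g \<longleftrightarrow> C2_on (- {0}) (sph_ext g)"

definition outer :: "real^'n \<Rightarrow> real^'n \<Rightarrow> real^'n^'n" where
  "outer v w = (\<chi> i j. v $ i * w $ j)"

definition proj_line :: "real^'n \<Rightarrow> real^'n^'n" where
  "proj_line s = outer s s"

definition proj_perp :: "real^'n \<Rightarrow> real^'n^'n" where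
  "proj_perp s = mat 1 - outer s s"

text \<open>Riemannian gradient of g at s on the unit sphere, as a vector in R^n (tangential
 part of the Euclidean gradient of an extension).\<close>
definition sph_grad :: "(real^'n \<Rightarrow> real) \<Rightarrow> real^'n \<Rightarrow> real^'n" where
  "sph_grad g s = proj_perp s *v grad (sph_ext g) s"

text \<open>Riemannian Hessian of g at s on the unit sphere, as a quadratic form on R^n extended
 by zero on R s: for an extension G, Hess g (v,v) = D^2 G(v,v) - (grad G . s)|v|^2 for
 tangent v (Gauss formula for the unit sphere).\<close>
definition sph_hess :: "(real^'n \<Rightarrow> real) \<Rightarrow> real^'n \<Rightarrow> real^'n^'n" where
  "sph_hess g s = proj_perp s ** (hess (sph_ext g) s - (grad (sph_ext g) s \<bullet> s) *\<^sub>R mat 1)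
                   ** proj_perp s"

definition Phi :: "real \<Rightarrow> (real^'n \<Rightarrow> real) \<Rightarrow> real^'n \<Rightarrow> real^'n^'n" where
  "Phi p g s = sph_hess g s - ((p - 2) * g s) *\<^sub>R proj_perp s
     - (p - 1) *\<^sub>R (outer s (sph_grad g s) + outer (sph_grad g s) s)
     + ((p - 2) * (p - 1) * g s) *\<^sub>R proj_line s"

text \<open>u(x) = |x|^{-(p-2)} g(x/|x|).\<close>
definition homog_u :: "real \<Rightarrow> (real^'n \<Rightarrow> real) \<Rightarrow> real^'n \<Rightarrow> real" where
  "homog_u p g x = norm x powr (2 - p) * g (x /\<^sub>R norm x)"

end

theory Submission
  imports Defs
begin


lemma Sym_scale: "A \<in> Sym \<Longrightarrow> c *\<^sub>R A \<in> Sym"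
  by (simp add: Sym_def transpose_def vec_eq_iff)

lemma cone_scale_F:
  assumes "cone_subequation F" "c > 0"
  shows "(\<lambda>A. c *\<^sub>R A) ` F = F"
proof
  show "(\<lambda>A. c *\<^sub>R A) ` F \<subseteq> F" using assms unfolding cone_subequation_def by auto
  show "F \<subseteq> (\<lambda>A. c *\<^sub>R A) ` F"
  proof
    fix A assume "A \<in> F"
    then have "inverse c *\<^sub>R A \<in> F" using assms unfolding cone_subequation_def by auto
    moreover have "A = c *\<^sub>R (inverse c *\<^sub>R A)" using assms by simp
    ultimately show "A \<in> (\<lambda>A. c *\<^sub>R A) ` F" by blast
  qed
qed

lemma hom_scale:
  assumes "c > (0::real)"
  shows "homeomorphic_map (top_of_set Sym) (top_of_set (Sym::(real^'n^'n) set)) (\<lambda>A. c *\<^sub>R A)"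
proof -
  have "homeomorphic_maps (top_of_set Sym) (top_of_set (Sym::(real^'n^'n) set)) (\<lambda>A. c *\<^sub>R A) (\<lambda>A. inverse c *\<^sub>R A)"
    unfolding homeomorphic_maps_def using assms
    by (auto simp: continuous_map_subtopology_eu Sym_scale intro!: continuous_intros)
  then show ?thesis using homeomorphic_map_maps by blast
qed

lemma bdry_scale:
  assumes "cone_subequation F" "c > 0" "A \<in> bdry F"
  shows "c *\<^sub>R A \<in> bdry F"
proof -
  have FS: "F \<subseteq> topspace (top_of_set Sym)" using assms(1) unfolding cone_subequation_def by auto
  have "bdry F = (top_of_set Sym) frontier_of ((\<lambda>A. c *\<^sub>R A) ` F)"
    unfolding bdry_def using cone_scale_F[OF assms(1,2)] by simp
  also have "\<dots> = (\<lambda>A. c *\<^sub>R A) ` bdry F"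
    unfolding bdry_def by (rule homeomorphic_map_frontier_of[OF hom_scale[OF assms(2)] FS])
  finally show ?thesis using assms(3) by blast
qed



lemma pd_of: "(f has_derivative D) (at x) \<Longrightarrow> pd f j x = D (axis j 1)"
  unfolding pd_def using frechet_derivative_at by metis

lemma lin_expand:
  assumes "linear (D :: real^'n \<Rightarrow> real)"
  shows "D h = (\<Sum>j\<in>UNIV. h$j * D (axis j 1))"
proof -
  have "D h = D (\<Sum>j\<in>UNIV. h$j *\<^sub>R axis j 1)"
    using basis_expansion[of h] by (simp add: scalar_mult_eq_scaleR)
  also have "\<dots> = (\<Sum>j\<in>UNIV. h$j * D (axis j 1))"
    using assms by (simp add: linear_sum linear_cmul)
  finally show ?thesis .
qed

lemma deriv_pd:
  assumes "f differentiable (at x)"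
  shows "(f has_derivative (\<lambda>h. \<Sum>j\<in>UNIV. h$j * pd f j x)) (at x)"
proof -
  have D: "(f has_derivative frechet_derivative f (at x)) (at x)"
    using assms frechet_derivative_works by blast
  have "linear (frechet_derivative f (at x))" using D has_derivative_linear by blast
  then have "frechet_derivative f (at x) = (\<lambda>h. \<Sum>j\<in>UNIV. h$j * pd f j x)"
    unfolding pd_def using lin_expand by blast
  then show ?thesis using D by simp
qed

lemma sum_axis[simp]: "(\<Sum>k\<in>UNIV. (axis i (1::real))$k * f k) = f i"
proof -
  have "\<And>k. (axis i (1::real))$k * f k = (if i = k then f k else 0)" by (simp add: axis_def)
  then show ?thesis by simp
qed

lemma sum_axis_scale[simp]: "(\<Sum>k\<in>UNIV. (c *\<^sub>R axis i (1::real))$k * f k) = c * f i"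
proof -
  have "\<And>k. (c *\<^sub>R axis i (1::real))$k * f k = (if i = k then c * f k else 0)" by (simp add: axis_def)
  then show ?thesis by simp
qed

lemma norm_powr_deriv:
  fixes x :: "real^'n"
  assumes "x \<noteq> 0"
  shows "((\<lambda>y. norm y powr a) has_derivative (\<lambda>h. a * norm x powr (a-2) * (x \<bullet> h))) (at x)"
proof -
  have n: "norm x > 0" using assms by simp
  have "((\<lambda>y. norm y powr a) has_derivative (\<lambda>h. (a * norm x powr (a-1)) * (h \<bullet> sgn x))) (at x)"
    using has_derivative_compose[OF has_derivative_norm[OF assms]
        has_field_derivative_imp_has_derivative[OF has_real_derivative_powr[OF n]]]
    by (simp add: mult.commute)
  moreover have "(\<lambda>h. (a * norm x powr (a-1)) * (h \<bullet> sgn x)) = (\<lambda>h. a * norm x powr (a-2) * (x \<bullet> h))"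
  proof
    fix h
    have "norm x powr (a-1) = norm x powr (a-2) * norm x"
      using powr_add[of "norm x" "a-2" 1] n by simp
    then show "(a * norm x powr (a-1)) * (h \<bullet> sgn x) = a * norm x powr (a-2) * (x \<bullet> h)"
      using n by (simp add: sgn_div_norm inner_commute)
  qed
  ultimately show ?thesis by simp
qed

lemma if1l: "(if P then 1 else 0) * (x::real) = (if P then x else 0)" by simp
lemma if1r: "(x::real) * (if P then 1 else 0) = (if P then x else 0)" by simp

lemma PA: "((mat 1 - outer s s) ** A)$i$j = A$i$j - s$i * (\<Sum>k\<in>UNIV. s$k * A$k$j)"
proof -
  have "((mat 1 - outer s s) ** A)$i$j = (\<Sum>k\<in>UNIV. (if i = k then A$k$j else 0) - s$i * (s$k * A$k$j))"
    by (simp add: matrix_matrix_mult_def mat_def outer_def left_diff_distrib mult.assoc if1l)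
  also have "\<dots> = A$i$j - s$i * (\<Sum>k\<in>UNIV. s$k * A$k$j)"
    by (simp add: sum_subtractf sum_distrib_left)
  finally show ?thesis .
qed

lemma AP: "(A ** (mat 1 - outer s s))$i$j = A$i$j - (\<Sum>k\<in>UNIV. A$i$k * s$k) * s$j"
proof -
  have "(A ** (mat 1 - outer s s))$i$j = (\<Sum>k\<in>UNIV. (if k = j then A$i$k else 0) - (A$i$k * s$k) * s$j)"
    by (simp add: matrix_matrix_mult_def mat_def outer_def right_diff_distrib mult.assoc if1r)
  also have "\<dots> = A$i$j - (\<Sum>k\<in>UNIV. A$i$k * s$k) * s$j"
    by (simp add: sum_subtractf sum_distrib_right)
  finally show ?thesis .
qed

context
  fixes g :: "real^'n \<Rightarrow> real"
  assumes C2: "C2_sphere g"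
begin

abbreviation "G \<equiv> sph_ext g"

lemma G_hom: "t > 0 \<Longrightarrow> G (t *\<^sub>R x) = G x"
  by (cases "x = 0") (auto simp: sph_ext_def field_simps)

lemma dG: "x \<noteq> 0 \<Longrightarrow> (G has_derivative (\<lambda>h. \<Sum>j\<in>UNIV. h$j * pd G j x)) (at x)"
  using C2 unfolding C2_sphere_def C2_on_def C1_on_def by (intro deriv_pd) auto

lemma ddG: "x \<noteq> 0 \<Longrightarrow> (pd G j has_derivative (\<lambda>h. \<Sum>i\<in>UNIV. h$i * pd (pd G j) i x)) (at x)"
  using C2 unfolding C2_sphere_def C2_on_def C1_on_def by (intro deriv_pd) auto

lemma H1:
  assumes t: "t > 0" and x: "x \<noteq> 0"
  shows "pd G j (t *\<^sub>R x) = pd G j x / t"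
proof -
  have tx: "t *\<^sub>R x \<noteq> 0" using t x by simp
  have "((\<lambda>y. G (t *\<^sub>R y)) has_derivative (\<lambda>h. \<Sum>j\<in>UNIV. (t *\<^sub>R h)$j * pd G j (t *\<^sub>R x))) (at x)"
    by (rule has_derivative_compose[where f="\<lambda>y. t *\<^sub>R y", OF _ dG[OF tx]]) (auto intro!: derivative_eq_intros)
  moreover have "(\<lambda>y. G (t *\<^sub>R y)) = G" using G_hom[OF t] by auto
  ultimately have "(G has_derivative (\<lambda>h. \<Sum>j\<in>UNIV. (t *\<^sub>R h)$j * pd G j (t *\<^sub>R x))) (at x)" by simp
  from pd_of[OF this, of j] have "pd G j x = t * pd G j (t *\<^sub>R x)"
    by (simp del: vector_scaleR_component)
  then show ?thesis using t by (simp add: field_simps)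
qed

lemma H2:
  assumes t: "t > 0" and x: "x \<noteq> 0"
  shows "pd (pd G j) i (t *\<^sub>R x) = pd (pd G j) i x / t^2"
proof -
  have tx: "t *\<^sub>R x \<noteq> 0" using t x by simp
  have "((\<lambda>y. pd G j (t *\<^sub>R y)) has_derivative (\<lambda>h. \<Sum>i\<in>UNIV. (t *\<^sub>R h)$i * pd (pd G j) i (t *\<^sub>R x))) (at x)"
    by (rule has_derivative_compose[where f="\<lambda>y. t *\<^sub>R y", OF _ ddG[OF tx]]) (auto intro!: derivative_eq_intros)
  then have "((\<lambda>y. t * pd G j (t *\<^sub>R y)) has_derivative (\<lambda>h. t * (\<Sum>i\<in>UNIV. (t *\<^sub>R h)$i * pd (pd G j) i (t *\<^sub>R x)))) (at x)"
    by (rule has_derivative_mult_right)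
  then have "(pd G j has_derivative (\<lambda>h. t * (\<Sum>i\<in>UNIV. (t *\<^sub>R h)$i * pd (pd G j) i (t *\<^sub>R x)))) (at x)"
  proof (rule has_derivative_transform_within_open[where s="-{0}"])
    fix y :: "real^'n" assume "y \<in> -{0}"
    then show "t * pd G j (t *\<^sub>R y) = pd G j y" using H1[OF t, of y] t by simp
  qed (use x in auto)
  from pd_of[OF this, of i] have "pd (pd G j) i x = t * (t * pd (pd G j) i (t *\<^sub>R x))"
    by (simp del: vector_scaleR_component)
  then show ?thesis using t by (simp add: field_simps power2_eq_square)
qed

lemma E0:
  assumes x: "x \<noteq> 0"
  shows "(\<Sum>j\<in>UNIV. x$j * pd G j x) = 0"
proof -
  have "((\<lambda>r::real. G (r *\<^sub>R x)) has_derivative (\<lambda>h. \<Sum>j\<in>UNIV. (h *\<^sub>R x)$j * pd G j x)) (at 1)"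
  proof -
    have S: "((\<lambda>r::real. r *\<^sub>R x) has_derivative (\<lambda>h. h *\<^sub>R x)) (at 1)"
      by (auto intro!: derivative_eq_intros)
    have D: "(G has_derivative (\<lambda>h. \<Sum>j\<in>UNIV. h$j * pd G j x)) (at (1 *\<^sub>R x))" using dG[OF x] by simp
    show ?thesis using has_derivative_compose[OF S D] by simp
  qed
  moreover have "((\<lambda>r::real. G (r *\<^sub>R x)) has_derivative (\<lambda>h. 0)) (at 1)"
    by (rule has_derivative_transform_within_open[OF has_derivative_const[of "G x"], where s="{0<..}"])
       (auto simp: G_hom)
  ultimately have "(\<lambda>h. \<Sum>j\<in>UNIV. (h *\<^sub>R x)$j * pd G j x) = (\<lambda>h. 0)"
    by (rule has_derivative_unique)
  from fun_cong[OF this, of 1] show ?thesis by simp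
qed

lemma E1:
  assumes x: "x \<noteq> 0"
  shows "(\<Sum>i\<in>UNIV. x$i * pd (pd G j) i x) = - pd G j x"
proof -
  have "((\<lambda>r::real. pd G j (r *\<^sub>R x)) has_derivative (\<lambda>h. \<Sum>i\<in>UNIV. (h *\<^sub>R x)$i * pd (pd G j) i x)) (at 1)"
  proof -
    have S: "((\<lambda>r::real. r *\<^sub>R x) has_derivative (\<lambda>h. h *\<^sub>R x)) (at 1)"
      by (auto intro!: derivative_eq_intros)
    have D: "(pd G j has_derivative (\<lambda>h. \<Sum>i\<in>UNIV. h$i * pd (pd G j) i x)) (at (1 *\<^sub>R x))" using ddG[OF x] by simp
    show ?thesis using has_derivative_compose[OF S D] by simp
  qed
  moreover have "((\<lambda>r::real. pd G j (r *\<^sub>R x)) has_derivative (\<lambda>h. (- pd G j x) * h)) (at 1)"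
  proof (rule has_derivative_transform_within_open[where s="{0<..}"])
    have "((\<lambda>r::real. pd G j x / r) has_field_derivative (- pd G j x)) (at 1)"
      by (auto intro!: derivative_eq_intros)
    then show "((\<lambda>r::real. pd G j x / r) has_derivative (\<lambda>h. (- pd G j x) * h)) (at 1)"
      by (rule has_field_derivative_imp_has_derivative)
  qed (auto simp: H1 x)
  ultimately have "(\<lambda>h. \<Sum>i\<in>UNIV. (h *\<^sub>R x)$i * pd (pd G j) i x) = (\<lambda>h. (- pd G j x) * h)"
    by (rule has_derivative_unique)
  from fun_cong[OF this, of 1] show ?thesis by simp
qed

lemma E2:
  assumes x: "x \<noteq> 0"
  shows "(\<Sum>j\<in>UNIV. x$j * pd (pd G j) i x) = - pd G i x"
proof -
  have "((\<lambda>y. \<Sum>j\<in>UNIV. y$j * pd G j y) has_derivative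
     (\<lambda>h. \<Sum>j\<in>UNIV. x$j * (\<Sum>i\<in>UNIV. h$i * pd (pd G j) i x) + h$j * pd G j x)) (at x)"
    by (intro has_derivative_sum has_derivative_mult ddG[OF x] has_derivative_ident
        bounded_linear.has_derivative[OF bounded_linear_vec_nth])
  moreover have "((\<lambda>y. \<Sum>j\<in>UNIV. y$j * pd G j y) has_derivative (\<lambda>h. 0)) (at x)"
    by (rule has_derivative_transform_within_open[OF has_derivative_const[of 0], where s="-{0}"])
       (use x E0 in auto)
  ultimately have "(\<lambda>h. \<Sum>j\<in>UNIV. x$j * (\<Sum>i\<in>UNIV. h$i * pd (pd G j) i x) + h$j * pd G j x) = (\<lambda>h. 0)"
    by (rule has_derivative_unique)
  from fun_cong[OF this, of "axis i 1"] show ?thesis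
    by (simp add: sum.distrib eq_neg_iff_add_eq_0)
qed

lemma u_eq: "homog_u p g = (\<lambda>y. norm y powr (2-p) * G y)"
  by (simp add: homog_u_def sph_ext_def fun_eq_iff)

lemma du:
  assumes x: "x \<noteq> 0"
  shows "pd (homog_u p g) j x = norm x powr (2-p) * pd G j x + (2-p) * norm x powr (2-p-2) * x$j * G x"
proof -
  have "(homog_u p g has_derivative (\<lambda>h. norm x powr (2-p) * (\<Sum>j\<in>UNIV. h$j * pd G j x)
          + ((2-p) * norm x powr (2-p-2) * (x \<bullet> h)) * G x)) (at x)"
    unfolding u_eq by (intro has_derivative_mult norm_powr_deriv dG x)
  from pd_of[OF this, of j] show ?thesis by (simp add: inner_axis)
qed

lemma ddu:
  assumes x: "x \<noteq> 0"
  shows "pd (pd (homog_u p g) j) i x = norm x powr (2-p) * pd (pd G j) i x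
     + ((2-p) * norm x powr (2-p-2) * x$i) * pd G j x
     + (2-p) * (norm x powr (2-p-2) * (x$j * pd G i x + (if i = j then 1 else 0) * G x)
          + ((2-p-2) * norm x powr (2-p-2-2) * x$i) * (x$j * G x))"
proof -
  let ?W = "\<lambda>y. norm y powr (2-p) * pd G j y + (2-p) * (norm y powr (2-p-2) * (y$j * G y))"
  have "(?W has_derivative (\<lambda>h. norm x powr (2-p) * (\<Sum>i\<in>UNIV. h$i * pd (pd G j) i x)
          + ((2-p) * norm x powr (2-p-2) * (x \<bullet> h)) * pd G j x
          + (2-p) * (norm x powr (2-p-2) * (x$j * (\<Sum>i\<in>UNIV. h$i * pd G i x) + h$j * G x)
          + ((2-p-2) * norm x powr (2-p-2-2) * (x \<bullet> h)) * (x$j * G x)))) (at x)"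
    by (intro has_derivative_add has_derivative_mult norm_powr_deriv dG ddG x has_derivative_mult_right
        bounded_linear.has_derivative[OF bounded_linear_vec_nth] has_derivative_ident)
  then have "(pd (homog_u p g) j has_derivative (\<lambda>h. norm x powr (2-p) * (\<Sum>i\<in>UNIV. h$i * pd (pd G j) i x)
          + ((2-p) * norm x powr (2-p-2) * (x \<bullet> h)) * pd G j x
          + (2-p) * (norm x powr (2-p-2) * (x$j * (\<Sum>i\<in>UNIV. h$i * pd G i x) + h$j * G x)
          + ((2-p-2) * norm x powr (2-p-2-2) * (x \<bullet> h)) * (x$j * G x)))) (at x)"
    by (rule has_derivative_transform_within_open[where s="-{0}"]) (use x du in auto)
  from pd_of[OF this, of i] show ?thesis
    by (simp only: sum_axis inner_axis) (simp add: axis_def)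
qed

lemma phi_entry:
  assumes s1: "norm s = 1"
  shows "Phi p g s $i$j = pd (pd G j) i s + (2-p) * (s$i * pd G j s + pd G i s * s$j)
     + (2-p) * (if i = j then 1 else 0) * G s + (2-p) * (-p) * (s$i * s$j) * G s"
proof -
  have s0: "s \<noteq> 0" using s1 by auto
  have gs: "G s = g s" using s1 by (simp add: sph_ext_def)
  have ss: "(\<Sum>k\<in>UNIV. s$k * s$k) = 1"
    using s1 by (simp add: norm_eq_1 inner_vec_def)
  have e0: "(\<Sum>k\<in>UNIV. s$k * pd G k s) = 0" by (rule E0[OF s0])
  have e1: "\<And>j. (\<Sum>k\<in>UNIV. s$k * pd (pd G j) k s) = - pd G j s" by (rule E1[OF s0])
  have e2: "\<And>i. (\<Sum>k\<in>UNIV. pd (pd G k) i s * s$k) = - pd G i s"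
    using E2[OF s0] by (simp add: mult.commute)
  have gs0: "grad G s \<bullet> s = 0" using e0 by (simp add: inner_vec_def grad_def mult.commute)
  define H where "H = hess G s"
  have Hij: "\<And>i j. H$i$j = pd (pd G j) i s" by (simp add: H_def hess_def)
  have sg: "sph_grad g s = grad G s"
  proof -
    have "\<And>i. (\<Sum>k\<in>UNIV. (if i = k then pd G k s else 0) - s$i * (s$k * pd G k s)) = pd G i s"
      using e0 by (simp add: sum_subtractf sum_distrib_left[symmetric])
    then show ?thesis
      by (simp add: sph_grad_def proj_perp_def vec_eq_iff matrix_vector_mult_def grad_def mat_def
          outer_def left_diff_distrib mult.assoc if1l)
  qed
  have PH: "\<And>i k. ((mat 1 - outer s s) ** H)$i$k = H$i$k + s$i * pd G k s"
    by (simp add: PA Hij e1)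
  have "(\<Sum>k\<in>UNIV. ((mat 1 - outer s s) ** H)$i$k * s$k) = (\<Sum>k\<in>UNIV. pd (pd G k) i s * s$k + s$i * (pd G k s * s$k))"
    by (simp add: PH Hij distrib_right mult.assoc)
  also have "\<dots> = - pd G i s"
    using e0 e2 by (simp add: sum.distrib sum_distrib_left[symmetric] mult.commute)
  finally have PHs: "(\<Sum>k\<in>UNIV. ((mat 1 - outer s s) ** H)$i$k * s$k) = - pd G i s" .
  have sh: "sph_hess g s $i$j = pd (pd G j) i s + s$i * pd G j s + pd G i s * s$j"
    unfolding sph_hess_def proj_perp_def H_def[symmetric] gs0
    by (simp only: scale_zero_left diff_zero AP PHs) (simp add: PH Hij)
  show ?thesis
    unfolding Phi_def
    by (simp add: sh sg gs[symmetric] proj_perp_def proj_line_def outer_def mat_def grad_def)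
       (simp add: algebra_simps)
qed

lemma hess_eq:
  assumes x: "x \<noteq> 0"
  shows "hess (homog_u p g) x = (norm x powr (-p)) *\<^sub>R Phi p g (x /\<^sub>R norm x)"
proof -
  define n where "n = norm x"
  define s where "s = x /\<^sub>R n"
  have n0: "n > 0" using x by (simp add: n_def)
  have s1: "norm s = 1" using x by (simp add: s_def n_def)
  have s0: "s \<noteq> 0" using s1 by auto
  have xs: "x = n *\<^sub>R s" using n0 by (simp add: s_def)
  have xi: "\<And>i. x$i = n * s$i" using xs by simp
  have Gx: "G x = G s" using G_hom[OF n0, of s] xs by simp
  have dGx: "\<And>j. pd G j x = pd G j s / n" using H1[OF n0 s0] xs by simp
  have ddGx: "\<And>i j. pd (pd G j) i x = pd (pd G j) i s / n^2" using H2[OF n0 s0] xs by simp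
  have P1: "n powr (2-p) = n powr (-p) * n^2"
    using powr_add[of n "-p" 2] n0 by (simp add: powr_realpow)
  have P2: "n powr (2-p-2-2) = n powr (-p) / n^2"
    using powr_diff[of n "-p" 2] n0 by (simp add: powr_realpow)
  show ?thesis
  proof (simp add: vec_eq_iff, intro allI)
    fix i j
    have "hess (homog_u p g) x $ i $ j = pd (pd (homog_u p g) j) i x" by (simp add: hess_def)
    also have "\<dots> = n powr (-p) * Phi p g s $i$j"
      unfolding ddu[OF x] phi_entry[OF s1] n_def[symmetric]
      unfolding P1 P2 xi Gx dGx ddGx
      using n0 by (simp add: field_simps power2_eq_square)
    finally show "hess (homog_u p g) x $ i $ j = norm x powr - p * Phi p g (x /\<^sub>R norm x) $ i $ j"
      by (simp add: s_def n_def)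
  qed
qed

end

theorem proposition5p2:
  fixes p :: real and F :: "(real^'n^'n) set" and g :: "real^'n \<Rightarrow> real"
  assumes "cone_subequation F" and "C2_sphere g"
  shows "((\<forall>x. x \<noteq> 0 \<longrightarrow> hess (homog_u p g) x \<in> F)
            \<longleftrightarrow> (\<forall>s\<in>sphere 0 1. Phi p g s \<in> F))
       \<and> ((\<forall>x. x \<noteq> 0 \<longrightarrow> hess (homog_u p g) x \<in> bdry F)
            \<longleftrightarrow> (\<forall>s\<in>sphere 0 1. Phi p g s \<in> bdry F))"
proof -
  have he: "\<And>x. x \<noteq> 0 \<Longrightarrow> hess (homog_u p g) x = (norm x powr (-p)) *\<^sub>R Phi p g (x /\<^sub>R norm x)"
    using hess_eq[OF assms(2)] by blast
  have hs: "\<And>s. s \<in> sphere 0 1 \<Longrightarrow> hess (homog_u p g) s = Phi p g s"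
  proof -
    fix s :: "real^'n" assume "s \<in> sphere 0 1"
    then have "norm s = 1" by simp
    then show "hess (homog_u p g) s = Phi p g s" 
    proof -
      assume n1: "norm s = 1"
      then have "s \<noteq> 0" by auto
      from he[OF this] n1 show ?thesis by simp
    qed
  qed
  have sph: "\<And>x::real^'n. x \<noteq> 0 \<Longrightarrow> x /\<^sub>R norm x \<in> sphere 0 1" by simp
  have pos: "\<And>x::real^'n. norm x powr (-p) > 0 \<or> x = 0" by auto
  have cone: "\<And>A t. A \<in> F \<Longrightarrow> t > 0 \<Longrightarrow> t *\<^sub>R A \<in> F"
    using assms(1) unfolding cone_subequation_def by auto
  show ?thesis
  proof (intro conjI iffI ballI allI impI)
    fix s :: "real^'n" assume "\<forall>x. x \<noteq> 0 \<longrightarrow> hess (homog_u p g) x \<in> F" "s \<in> sphere 0 1"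
    moreover from \<open>s \<in> sphere 0 1\<close> have "s \<noteq> 0" by auto
    ultimately show "Phi p g s \<in> F" using hs by metis
  next
    fix x :: "real^'n" assume "\<forall>s\<in>sphere 0 1. Phi p g s \<in> F" "x \<noteq> 0"
    then show "hess (homog_u p g) x \<in> F" using he sph cone pos by metis
  next
    fix s :: "real^'n" assume "\<forall>x. x \<noteq> 0 \<longrightarrow> hess (homog_u p g) x \<in> bdry F" "s \<in> sphere 0 1"
    moreover from \<open>s \<in> sphere 0 1\<close> have "s \<noteq> 0" by auto
    ultimately show "Phi p g s \<in> bdry F" using hs by metis
  next
    fix x :: "real^'n" assume "\<forall>s\<in>sphere 0 1. Phi p g s \<in> bdry F" "x \<noteq> 0"
    then show "hess (homog_u p g) x \<in> bdry F" using he sph bdry_scale[OF assms(1)] pos by metis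
  qed
qed

end
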